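(* Let $U$ be the open unit disc centred at the origin of $\mathbb{R}^2$, $f\colon\partial U\to\mathbb{R}$, and suppose $G_f(t)=f(e^{it})$ is Laplace integrable on $[-\pi,\pi]$. Then for every $(r,\theta)\in[0,1)\times[-\pi,\pi]$ the Laplace integral \[F(r,\theta)=\frac{1}{2\pi}\int_{-\pi}^{\pi}G_f(t)P_r(\theta-t)\,dt,\qquad P_r(u)=\frac{1-r^2}{1-2r\cos u+r^2},\] is well defined, and the function $re^{i\theta}\mapsto F(r,\theta)$ is harmonic on $U$.
   Context: Laplace integral on $[a,b]$: with lower/upper Laplace derivates $\underline{LD}_1F(x)$, $\overline{LD}_1F(x)$ being the minimum of the $\liminf$'s, resp. maximum of the $\limsup$'s, as $s\to\infty$ of $s^2\int_0^\delta e^{-st}[F(x+t)-F(x)]dt$ and $(-s^2)\int_0^\delta e^{-st}[F(x-t)-F(x)]dt$ (one-sided at endpoints), a major function of $h$ is a continuous $W$ with $\underline{LD}_1W\geqslant h$, $\underline{LD}_1W>-\infty$ everywhere on $[a,b]$, a minor function a continuous $V$ with $\overline{LD}_1V\leqslant h$, $\overline{LD}_1V<\infty$ everywhere, and $h$ is Laplace integrable if $\sup_V(V(b)-V(a))=\inf_W(W(b)-W(a))$ is finite, the value being $\int_a^bh$. *)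

theory Defs
  imports "HOL-Analysis.Analysis"
begin

definition lap_right :: "(real \<Rightarrow> real) \<Rightarrow> real \<Rightarrow> real \<Rightarrow> real \<Rightarrow> real" where
  "lap_right F x d s = s\<^sup>2 * integral {0..d} (\<lambda>t. exp (- s * t) * (F (x + t) - F x))"

definition lap_left :: "(real \<Rightarrow> real) \<Rightarrow> real \<Rightarrow> real \<Rightarrow> real \<Rightarrow> real" where
  "lap_left F x d s = (- s\<^sup>2) * integral {0..d} (\<lambda>t. exp (- s * t) * (F (x - t) - F x))"

text \<open>Convention for delta: at an interior point we take d = min (x-a) (b-x);
  at the endpoints only the one-sided quotient is used, with d = b - a.
  (For continuous F the liminf/limsup do not depend on the choice of d > 0.)\<close>

definition lower_LD :: "real \<Rightarrow> real \<Rightarrow> (real \<Rightarrow> real) \<Rightarrow> real \<Rightarrow> ereal" where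
  "lower_LD a b F x =
     (if x = a then Liminf at_top (\<lambda>s. ereal (lap_right F x (b - a) s))
      else if x = b then Liminf at_top (\<lambda>s. ereal (lap_left F x (b - a) s))
      else min (Liminf at_top (\<lambda>s. ereal (lap_right F x (min (x - a) (b - x)) s)))
               (Liminf at_top (\<lambda>s. ereal (lap_left F x (min (x - a) (b - x)) s))))"

definition upper_LD :: "real \<Rightarrow> real \<Rightarrow> (real \<Rightarrow> real) \<Rightarrow> real \<Rightarrow> ereal" where
  "upper_LD a b F x =
     (if x = a then Limsup at_top (\<lambda>s. ereal (lap_right F x (b - a) s))
      else if x = b then Limsup at_top (\<lambda>s. ereal (lap_left F x (b - a) s))
      else max (Limsup at_top (\<lambda>s. ereal (lap_right F x (min (x - a) (b - x)) s)))
               (Limsup at_top (\<lambda>s. ereal (lap_left F x (min (x - a) (b - x)) s))))"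

definition laplace_major :: "real \<Rightarrow> real \<Rightarrow> (real \<Rightarrow> real) \<Rightarrow> (real \<Rightarrow> real) \<Rightarrow> bool" where
  "laplace_major a b h W \<longleftrightarrow> continuous_on {a..b} W \<and>
     (\<forall>x\<in>{a..b}. lower_LD a b W x \<ge> ereal (h x) \<and> lower_LD a b W x > -\<infinity>)"

definition laplace_minor :: "real \<Rightarrow> real \<Rightarrow> (real \<Rightarrow> real) \<Rightarrow> (real \<Rightarrow> real) \<Rightarrow> bool" where
  "laplace_minor a b h V \<longleftrightarrow> continuous_on {a..b} V \<and>
     (\<forall>x\<in>{a..b}. upper_LD a b V x \<le> ereal (h x) \<and> upper_LD a b V x < \<infinity>)"

definition laplace_upper :: "real \<Rightarrow> real \<Rightarrow> (real \<Rightarrow> real) \<Rightarrow> ereal" where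
  "laplace_upper a b h = (INF W \<in> {W. laplace_major a b h W}. ereal (W b - W a))"

definition laplace_lower :: "real \<Rightarrow> real \<Rightarrow> (real \<Rightarrow> real) \<Rightarrow> ereal" where
  "laplace_lower a b h = (SUP V \<in> {V. laplace_minor a b h V}. ereal (V b - V a))"

definition laplace_integrable :: "real \<Rightarrow> real \<Rightarrow> (real \<Rightarrow> real) \<Rightarrow> bool" where
  "laplace_integrable a b h \<longleftrightarrow>
     laplace_lower a b h = laplace_upper a b h \<and> \<bar>laplace_upper a b h\<bar> \<noteq> \<infinity>"

definition laplace_integral :: "real \<Rightarrow> real \<Rightarrow> (real \<Rightarrow> real) \<Rightarrow> real" where
  "laplace_integral a b h = real_of_ereal (laplace_upper a b h)"

definition poisson_kernel :: "real \<Rightarrow> real \<Rightarrow> real" where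
  "poisson_kernel r u = (1 - r\<^sup>2) / (1 - 2 * r * cos u + r\<^sup>2)"

definition has_pdx :: "(complex \<Rightarrow> real) \<Rightarrow> real \<Rightarrow> complex \<Rightarrow> bool" where
  "has_pdx g d z \<longleftrightarrow> ((\<lambda>t. g (z + complex_of_real t)) has_real_derivative d) (at 0)"

definition has_pdy :: "(complex \<Rightarrow> real) \<Rightarrow> real \<Rightarrow> complex \<Rightarrow> bool" where
  "has_pdy g d z \<longleftrightarrow> ((\<lambda>t. g (z + \<i> * complex_of_real t)) has_real_derivative d) (at 0)"

definition harmonic_on :: "complex set \<Rightarrow> (complex \<Rightarrow> real) \<Rightarrow> bool" where
  "harmonic_on S u \<longleftrightarrow> open S \<and>
     (\<exists>ux uy uxx uxy uyx uyy.
        (\<forall>z\<in>S. has_pdx u (ux z) z \<and> has_pdy u (uy z) z \<and>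
                has_pdx ux (uxx z) z \<and> has_pdy ux (uxy z) z \<and>
                has_pdx uy (uyx z) z \<and> has_pdy uy (uyy z) z \<and>
                uxx z + uyy z = 0) \<and>
        continuous_on S u \<and> continuous_on S ux \<and> continuous_on S uy \<and>
        continuous_on S uxx \<and> continuous_on S uxy \<and>
        continuous_on S uyx \<and> continuous_on S uyy)"

end

theory Submission
  imports Defs "HOL-Real_Asymp.Real_Asymp" "HOL-Complex_Analysis.Complex_Analysis"
begin


lemma lap_kernel_int:
  fixes s \<eta> :: real
  assumes s: "s > 0" and eta: "\<eta> \<ge> 0"
  shows "((\<lambda>t. exp (- s * t) * t) has_integral (1 - exp (- s * \<eta>) * (1 + s * \<eta>)) / s\<^sup>2) {0..\<eta>}"
proof -
  let ?F = "\<lambda>t. - (exp (- s * t) * (1 + s * t)) / s\<^sup>2"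
  have "((\<lambda>t. exp (- s * t) * t) has_integral (?F \<eta> - ?F 0)) {0..\<eta>}"
  proof (rule fundamental_theorem_of_calculus[OF eta])
    fix t assume "t \<in> {0..\<eta>}"
    show "(?F has_vector_derivative exp (- s * t) * t) (at t within {0..\<eta>})"
      unfolding has_real_derivative_iff_has_vector_derivative[symmetric]
      apply (rule derivative_eq_intros refl | simp)+
      using s by (auto simp: divide_simps algebra_simps power2_eq_square)
  qed
  also have "?F \<eta> - ?F 0 = (1 - exp (- s * \<eta>) * (1 + s * \<eta>)) / s\<^sup>2"
    using s by (simp add: field_simps)
  finally show ?thesis .
qed

lemma lap_upper_bound:
  fixes E :: "real \<Rightarrow> real"
  assumes d: "\<delta> > 0" and eta: "0 < \<eta>" "\<eta> \<le> \<delta>"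
    and cont: "continuous_on {0..\<delta>} E"
    and le: "\<And>t. t \<in> {0..\<eta>} \<Longrightarrow> E t \<le> c * t"
    and e: "e > 0"
  shows "eventually (\<lambda>s. s\<^sup>2 * integral {0..\<delta>} (\<lambda>t. exp (- s * t) * E t) \<le> c + e) at_top"
proof -
  obtain M where M0: "M \<ge> 0" and M: "\<And>t. t \<in> {0..\<delta>} \<Longrightarrow> norm (E t) \<le> M"
    using continuous_on_compact_bound[OF compact_Icc cont] by metis
  have l1: "((\<lambda>s. exp (- s * \<eta>) * (1 + s * \<eta>)) \<longlongrightarrow> 0) at_top"
    using eta by real_asymp
  have l2: "((\<lambda>s. s\<^sup>2 * exp (- s * \<eta>)) \<longlongrightarrow> 0) at_top"
    using eta by real_asymp
  have "((\<lambda>s. - c * (exp (- s * \<eta>) * (1 + s * \<eta>)) + (\<delta> - \<eta>) * M * (s\<^sup>2 * exp (- s * \<eta>))) \<longlongrightarrow>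
      - c * 0 + (\<delta> - \<eta>) * M * 0) at_top"
    by (intro tendsto_intros l1 l2)
  then have "eventually (\<lambda>s. - c * (exp (- s * \<eta>) * (1 + s * \<eta>)) + (\<delta> - \<eta>) * M * (s\<^sup>2 * exp (- s * \<eta>)) < e) at_top"
    using e by (auto simp: order_tendsto_iff)
  moreover have "eventually (\<lambda>s::real. s > 0) at_top" by (rule eventually_gt_at_top)
  ultimately show ?thesis
  proof eventually_elim
    case (elim s)
    let ?f = "\<lambda>t. exp (- s * t) * E t"
    have intf: "?f integrable_on {0..\<delta>}"
      by (intro integrable_continuous_interval continuous_intros cont)
    have split: "integral {0..\<eta>} ?f + integral {\<eta>..\<delta>} ?f = integral {0..\<delta>} ?f"
      by (rule Henstock_Kurzweil_Integration.integral_combine) (use eta intf in auto)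
    have i1: "integral {0..\<eta>} ?f \<le> c * ((1 - exp (- s * \<eta>) * (1 + s * \<eta>)) / s\<^sup>2)"
    proof -
      have ker: "((\<lambda>t. c * (exp (- s * t) * t)) has_integral c * ((1 - exp (- s * \<eta>) * (1 + s * \<eta>)) / s\<^sup>2)) {0..\<eta>}"
        using lap_kernel_int[of s \<eta>] elim eta by (intro has_integral_mult_right) auto
      have "?f integrable_on {0..\<eta>}"
        by (rule integrable_subinterval_real[OF intf]) (use eta in auto)
      then show ?thesis
        using has_integral_le[OF integrable_integral[OF \<open>?f integrable_on {0..\<eta>}\<close>] ker] le
        by (simp add: mult.left_commute)
    qed
    have i2: "integral {\<eta>..\<delta>} ?f \<le> exp (- s * \<eta>) * M * (\<delta> - \<eta>)"
    proof -
      have "norm (integral {\<eta>..\<delta>} ?f) \<le> exp (- s * \<eta>) * M * (\<delta> - \<eta>)"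
      proof (rule integral_bound)
        show "continuous_on {\<eta>..\<delta>} ?f"
          by (intro continuous_intros continuous_on_subset[OF cont]) (use eta in auto)
        fix t assume t: "t \<in> {\<eta>..\<delta>}"
        have "norm (?f t) = exp (- s * t) * norm (E t)" by (simp add: abs_mult)
        also have "\<dots> \<le> exp (- s * \<eta>) * M"
          using t eta elim M[of t] by (intro mult_mono) (auto simp: mult_left_mono)
        finally show "norm (?f t) \<le> exp (- s * \<eta>) * M" .
      qed (use eta in auto)
      then show ?thesis by simp
    qed
    have "s\<^sup>2 * integral {0..\<delta>} ?f \<le> s\<^sup>2 * (c * ((1 - exp (- s * \<eta>) * (1 + s * \<eta>)) / s\<^sup>2) + exp (- s * \<eta>) * M * (\<delta> - \<eta>))"
      using i1 i2 split by (intro mult_left_mono) auto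
    also have "\<dots> = c + (- c * (exp (- s * \<eta>) * (1 + s * \<eta>)) + (\<delta> - \<eta>) * M * (s\<^sup>2 * exp (- s * \<eta>)))"
      using elim by (simp add: field_simps)
    also have "\<dots> \<le> c + e" using elim by simp
    finally show ?case .
  qed
qed



lemma cont_shift:
  fixes W :: "real \<Rightarrow> 'z::real_normed_vector"
  assumes "continuous_on {a..b} W" "a \<le> x" "x + \<delta> \<le> b"
  shows "continuous_on {0..\<delta>} (\<lambda>t. W (x + t))"
proof -
  have "continuous_on {0..\<delta>} (\<lambda>t. x + t)" by (rule continuous_on_add[OF continuous_on_const continuous_on_id])
  then show ?thesis by (rule continuous_on_compose2[OF assms(1)]) (use assms in auto)
qed

lemma cont_shift_left:
  fixes W :: "real \<Rightarrow> 'z::real_normed_vector"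
  assumes "continuous_on {a..b} W" "x \<le> b" "a \<le> x - \<delta>"
  shows "continuous_on {0..\<delta>} (\<lambda>t. W (x - t))"
proof -
  have "continuous_on {0..\<delta>} (\<lambda>t. x - t)" by (rule continuous_on_diff[OF continuous_on_const continuous_on_id])
  then show ?thesis by (rule continuous_on_compose2[OF assms(1)]) (use assms in auto)
qed

lemma lap_right_diff:
  assumes "continuous_on {a..b} W" "continuous_on {a..b} V" "a \<le> x" "x + \<delta> \<le> b"
  shows "lap_right W x \<delta> s - lap_right V x \<delta> s =
     s\<^sup>2 * integral {0..\<delta>} (\<lambda>t. exp (- s * t) * ((W (x + t) - W x) - (V (x + t) - V x)))"
proof -
  have cW: "continuous_on {0..\<delta>} (\<lambda>t. W (x + t))" by (rule cont_shift[OF assms(1,3,4)])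
  have cV: "continuous_on {0..\<delta>} (\<lambda>t. V (x + t))" by (rule cont_shift[OF assms(2,3,4)])
  have iW: "(\<lambda>t. exp (- s * t) * (W (x + t) - W x)) integrable_on {0..\<delta>}"
    by (intro integrable_continuous_interval continuous_intros cW)
  have iV: "(\<lambda>t. exp (- s * t) * (V (x + t) - V x)) integrable_on {0..\<delta>}"
    by (intro integrable_continuous_interval continuous_intros cV)
  have e: "(\<lambda>t. exp (- s * t) * ((W (x + t) - W x) - (V (x + t) - V x))) =
     (\<lambda>t. exp (- s * t) * (W (x + t) - W x) - exp (- s * t) * (V (x + t) - V x))"
    by (auto simp: algebra_simps)
  show ?thesis
    unfolding lap_right_def e integral_diff[OF iW iV]
    by (simp add: right_diff_distrib)
qed

lemma lower_LD_le_right: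
  assumes "a \<le> x" "x < b"
  shows "lower_LD a b W x \<le> Liminf at_top (\<lambda>s. ereal (lap_right W x (if x = a then b - a else min (x - a) (b - x)) s))"
  using assms unfolding lower_LD_def by auto

lemma upper_LD_ge_right:
  assumes "a \<le> x" "x < b"
  shows "Limsup at_top (\<lambda>s. ereal (lap_right W x (if x = a then b - a else min (x - a) (b - x)) s)) \<le> upper_LD a b W x"
  using assms unfolding upper_LD_def by auto

lemma major_minor_mono:
  assumes M: "laplace_major a b h W" and m: "laplace_minor a b h V"
    and cd: "a \<le> c" "c \<le> d" "d \<le> b"
  shows "V d - V c \<le> W d - W c"
proof (rule ccontr)
  assume "\<not> ?thesis"
  hence gap: "V d - V c > W d - W c" by simp
  have "c < d" using gap cd by (cases "c = d") auto
  have contW: "continuous_on {a..b} W" and contV: "continuous_on {a..b} V"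
    using M m unfolding laplace_major_def laplace_minor_def by auto
  define \<epsilon> where "\<epsilon> = ((V d - V c) - (W d - W c)) / (2 * (d - c))"
  have \<epsilon>: "\<epsilon> > 0" unfolding \<epsilon>_def using gap \<open>c < d\<close> by auto
  define K where "K = (\<lambda>x. W x - V x + \<epsilon> * x)"
  have cK: "continuous_on {c..d} K" unfolding K_def
    using cd by (intro continuous_intros continuous_on_subset[OF contW] continuous_on_subset[OF contV]) auto
  obtain x0 where x0: "x0 \<in> {c..d}" and x0max: "\<And>y. y \<in> {c..d} \<Longrightarrow> K y \<le> K x0"
    using continuous_attains_sup[OF compact_Icc _ cK] \<open>c < d\<close> by auto
  have "K c - K d = ((V d - V c) - (W d - W c)) - \<epsilon> * (d - c)"
    unfolding K_def by (simp add: algebra_simps)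
  also have "\<epsilon> * (d - c) = ((V d - V c) - (W d - W c)) / 2"
    unfolding \<epsilon>_def using \<open>c < d\<close> by (simp add: field_simps)
  finally have "K c > K d" using gap by (simp add: field_simps)
  with x0max[of c] \<open>c < d\<close> have "x0 \<noteq> d" by force
  with x0 have x0d: "x0 < d" by auto
  define \<delta> where "\<delta> = (if x0 = a then b - a else min (x0 - a) (b - x0))"
  have ax0: "a \<le> x0" "x0 < b" using x0 x0d cd by auto
  have \<delta>: "\<delta> > 0" "x0 + \<delta> \<le> b" using ax0 unfolding \<delta>_def by auto
  have "ereal (h x0) \<le> lower_LD a b W x0"
    using M ax0 unfolding laplace_major_def by auto
  also have "\<dots> \<le> Liminf at_top (\<lambda>s. ereal (lap_right W x0 \<delta> s))"
    unfolding \<delta>_def by (rule lower_LD_le_right[OF ax0])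
  finally have LW: "ereal (h x0) \<le> Liminf at_top (\<lambda>s. ereal (lap_right W x0 \<delta> s))" .
  have "Limsup at_top (\<lambda>s. ereal (lap_right V x0 \<delta> s)) \<le> upper_LD a b V x0"
    unfolding \<delta>_def by (rule upper_LD_ge_right[OF ax0])
  also have "\<dots> \<le> ereal (h x0)"
    using m ax0 unfolding laplace_minor_def by auto
  finally have LV: "Limsup at_top (\<lambda>s. ereal (lap_right V x0 \<delta> s)) \<le> ereal (h x0)" .
  define \<eta> where "\<eta> = min \<delta> (d - x0)"
  have \<eta>: "0 < \<eta>" "\<eta> \<le> \<delta>" using \<delta> x0d unfolding \<eta>_def by auto
  define E where "E = (\<lambda>t. (W (x0 + t) - W x0) - (V (x0 + t) - V x0))"
  have cE: "continuous_on {0..\<delta>} E" unfolding E_def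
    by (intro continuous_intros cont_shift[OF contW] cont_shift[OF contV] ax0 \<delta>)
  have Ele: "E t \<le> (- \<epsilon>) * t" if "t \<in> {0..\<eta>}" for t
  proof -
    have "x0 + t \<in> {c..d}" using that x0 unfolding \<eta>_def by auto
    from x0max[OF this] show ?thesis unfolding K_def E_def by (simp add: algebra_simps)
  qed
  have ev1: "eventually (\<lambda>s. s\<^sup>2 * integral {0..\<delta>} (\<lambda>t. exp (- s * t) * E t) \<le> - \<epsilon> + \<epsilon> / 2) at_top"
    by (rule lap_upper_bound[OF \<delta>(1) \<eta> cE Ele]) (use \<epsilon> in auto)
  have ev2: "eventually (\<lambda>s. ereal (h x0 - \<epsilon> / 4) < ereal (lap_right W x0 \<delta> s)) at_top"
  proof -
    have "ereal (h x0 - \<epsilon> / 4) < ereal (h x0)" using \<epsilon> by simp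
    then show ?thesis using LW unfolding le_Liminf_iff by blast
  qed
  have ev3: "eventually (\<lambda>s. ereal (lap_right V x0 \<delta> s) < ereal (h x0 + \<epsilon> / 4)) at_top"
  proof -
    have "ereal (h x0 + \<epsilon> / 4) > ereal (h x0)" using \<epsilon> by simp
    then show ?thesis using LV unfolding Limsup_le_iff by blast
  qed
  have "eventually (\<lambda>s::real. False) at_top"
    using ev1 ev2 ev3
  proof eventually_elim
    case (elim s)
    have "lap_right W x0 \<delta> s - lap_right V x0 \<delta> s = s\<^sup>2 * integral {0..\<delta>} (\<lambda>t. exp (- s * t) * E t)"
      unfolding E_def by (rule lap_right_diff[OF contW contV ax0(1) \<delta>(2)])
    with elim \<epsilon> show False by simp
  qed
  then show False by simp
qed




lemma lap_small:
  fixes E :: "real \<Rightarrow> real"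
  assumes d: "\<delta> > 0" and cont: "continuous_on {0..\<delta>} E"
    and small: "\<And>e. e > 0 \<Longrightarrow> \<exists>\<eta>>0. \<forall>t\<in>{0..\<eta>}. \<bar>E t\<bar> \<le> e * t"
  shows "((\<lambda>s. s\<^sup>2 * integral {0..\<delta>} (\<lambda>t. exp (- s * t) * E t)) \<longlongrightarrow> 0) at_top"
proof (rule order_tendstoI)
  fix y :: real assume y: "y > 0"
  obtain \<eta> where \<eta>: "\<eta> > 0" "\<forall>t\<in>{0..\<eta>}. \<bar>E t\<bar> \<le> y / 2 * t" using small[of "y/2"] y by auto
  have \<eta>3: "\<And>t. t \<in> {0..min \<eta> \<delta>} \<Longrightarrow> E t \<le> y / 2 * t"
  proof -
    fix t assume "t \<in> {0..min \<eta> \<delta>}"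
    then have "\<bar>E t\<bar> \<le> y / 2 * t" using \<eta>(2) by auto
    then show "E t \<le> y / 2 * t" by linarith
  qed
  have "eventually (\<lambda>s. s\<^sup>2 * integral {0..\<delta>} (\<lambda>t. exp (- s * t) * E t) \<le> y / 2 + y / 4) at_top"
    by (rule lap_upper_bound[where \<eta>="min \<eta> \<delta>", OF _ _ _ _ \<eta>3]) (use d \<eta> y cont in auto)
  then show "eventually (\<lambda>s. s\<^sup>2 * integral {0..\<delta>} (\<lambda>t. exp (- s * t) * E t) < y) at_top"
    by eventually_elim (use y in auto)
next
  fix y :: real assume y: "y < 0"
  obtain \<eta> where \<eta>: "\<eta> > 0" "\<forall>t\<in>{0..\<eta>}. \<bar>E t\<bar> \<le> (- y) / 2 * t" using small[of "-y/2"] y by auto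
  have \<eta>3: "\<And>t. t \<in> {0..min \<eta> \<delta>} \<Longrightarrow> - E t \<le> (- y) / 2 * t"
  proof -
    fix t assume "t \<in> {0..min \<eta> \<delta>}"
    then have "\<bar>E t\<bar> \<le> (- y) / 2 * t" using \<eta>(2) by auto
    then show "- E t \<le> (- y) / 2 * t" by linarith
  qed
  have "eventually (\<lambda>s. s\<^sup>2 * integral {0..\<delta>} (\<lambda>t. exp (- s * t) * (- E t)) \<le> (- y) / 2 + (- y) / 4) at_top"
    by (rule lap_upper_bound[where \<eta>="min \<eta> \<delta>", OF _ _ _ _ \<eta>3]) (use d \<eta> y cont in \<open>auto intro!: continuous_intros\<close>)
  then show "eventually (\<lambda>s. s\<^sup>2 * integral {0..\<delta>} (\<lambda>t. exp (- s * t) * E t) > y) at_top"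
  proof eventually_elim
    case (elim s)
    have "integral {0..\<delta>} (\<lambda>t. exp (- s * t) * (- E t)) = - integral {0..\<delta>} (\<lambda>t. exp (- s * t) * E t)"
    proof -
      have "(\<lambda>t. exp (- s * t) * (- E t)) = (\<lambda>t. - (exp (- s * t) * E t))" by auto
      then show ?thesis by simp
    qed
    with elim y show ?case by simp
  qed
qed

definition prodF :: "real \<Rightarrow> (real \<Rightarrow> real) \<Rightarrow> (real \<Rightarrow> real) \<Rightarrow> (real \<Rightarrow> real) \<Rightarrow> real \<Rightarrow> real" where
  "prodF a \<phi> \<phi>' W x = W x * \<phi> x - integral {a..x} (\<lambda>u. W u * \<phi>' u)"

locale phi_C1 =
  fixes a b :: real and \<phi> \<phi>' :: "real \<Rightarrow> real"
  assumes dphi: "\<And>t. (\<phi> has_real_derivative \<phi>' t) (at t)"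
    and cphi': "continuous_on {a..b} \<phi>'"
begin

lemma cphi: "continuous_on S \<phi>"
  using dphi by (meson DERIV_isCont continuous_at_imp_continuous_on)

lemma int_phi': "x \<in> {a..b} \<Longrightarrow> y \<in> {a..b} \<Longrightarrow> x \<le> y \<Longrightarrow> integral {x..y} \<phi>' = \<phi> y - \<phi> x"
proof -
  assume xy: "x \<in> {a..b}" "y \<in> {a..b}" "x \<le> y"
  have "(\<phi>' has_integral (\<phi> y - \<phi> x)) {x..y}"
    by (rule fundamental_theorem_of_calculus[OF xy(3)])
       (use dphi in \<open>auto simp: has_real_derivative_iff_has_vector_derivative[symmetric] intro: has_field_derivative_at_within\<close>)
  then show ?thesis by (rule integral_unique)
qed

lemma cont_prodF:
  assumes W: "continuous_on {a..b} W"
  shows "continuous_on {a..b} (prodF a \<phi> \<phi>' W)"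
proof -
  have "(\<lambda>u. W u * \<phi>' u) integrable_on {a..b}"
    by (intro integrable_continuous_interval continuous_intros W cphi')
  then have "continuous_on {a..b} (\<lambda>x. integral {a..x} (\<lambda>u. W u * \<phi>' u))"
    by (rule indefinite_integral_continuous_1)
  then show ?thesis unfolding prodF_def[abs_def]
    by (intro continuous_intros W cphi)
qed

lemma bound_phi': obtains B where "B \<ge> 0" "\<And>u. u \<in> {a..b} \<Longrightarrow> \<bar>\<phi>' u\<bar> \<le> B"
proof -
  obtain B where "B \<ge> 0" "\<And>x. x \<in> {a..b} \<Longrightarrow> norm (\<phi>' x) \<le> B"
    using continuous_on_compact_bound[OF compact_Icc cphi'] by blast
  then show ?thesis using that by auto
qed

lemma unif_W:
  fixes W :: "real \<Rightarrow> real"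
  assumes W: "continuous_on {a..b} W" and e: "e > 0"
  obtains d where "d > 0" "\<And>u v. u \<in> {a..b} \<Longrightarrow> v \<in> {a..b} \<Longrightarrow> \<bar>u - v\<bar> < d \<Longrightarrow> \<bar>W u - W v\<bar> < e"
proof -
  have "uniformly_continuous_on {a..b} W" by (rule compact_uniformly_continuous[OF W compact_Icc])
  then obtain d where "d > 0" "\<forall>x\<in>{a..b}. \<forall>x'\<in>{a..b}. dist x' x < d \<longrightarrow> dist (W x') (W x) < e"
    using e unfolding uniformly_continuous_on_def by metis
  then show ?thesis using that by (auto simp: dist_real_def abs_minus_commute)
qed

lemma prod_right_core:
  assumes x: "a \<le> x" and \<delta>: "\<delta> > 0" "x + \<delta> \<le> b" and W: "continuous_on {a..b} W"
  shows "((\<lambda>s. lap_right (prodF a \<phi> \<phi>' W) x \<delta> s - \<phi> x * lap_right W x \<delta> s) \<longlongrightarrow> 0) at_top"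
proof -
  let ?P = "prodF a \<phi> \<phi>' W"
  define E where "E = (\<lambda>t. (?P (x + t) - ?P x) - \<phi> x * (W (x + t) - W x))"
  have cP: "continuous_on {0..\<delta>} (\<lambda>t. ?P (x + t))" by (rule cont_shift[OF cont_prodF[OF W] x \<delta>(2)])
  have cW: "continuous_on {0..\<delta>} (\<lambda>t. W (x + t))" by (rule cont_shift[OF W x \<delta>(2)])
  have cE: "continuous_on {0..\<delta>} E" unfolding E_def by (intro continuous_intros cP cW)
  have eq: "lap_right ?P x \<delta> s - \<phi> x * lap_right W x \<delta> s = s\<^sup>2 * integral {0..\<delta>} (\<lambda>t. exp (- s * t) * E t)" for s
  proof -
    have iP: "(\<lambda>t. exp (- s * t) * (?P (x + t) - ?P x)) integrable_on {0..\<delta>}"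
      by (intro integrable_continuous_interval continuous_intros cP)
    have iW: "(\<lambda>t. \<phi> x * (exp (- s * t) * (W (x + t) - W x))) integrable_on {0..\<delta>}"
      by (intro integrable_continuous_interval continuous_intros cW)
    have e: "(\<lambda>t. exp (- s * t) * E t) = (\<lambda>t. exp (- s * t) * (?P (x + t) - ?P x) - \<phi> x * (exp (- s * t) * (W (x + t) - W x)))"
      unfolding E_def by (auto simp: algebra_simps)
    show ?thesis unfolding lap_right_def e integral_diff[OF iP iW] integral_mult_right
      by (simp add: algebra_simps)
  qed
  have Eint: "E t = integral {x..x + t} (\<lambda>u. (W (x + t) - W u) * \<phi>' u)" if t: "t \<in> {0..\<delta>}" for t
  proof -
    have sub: "{x..x+t} \<subseteq> {a..b}" "{a..x+t} \<subseteq> {a..b}" using t x \<delta> by auto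
    have i1: "(\<lambda>u. W u * \<phi>' u) integrable_on {a..x+t}"
      by (intro integrable_continuous_interval continuous_intros continuous_on_subset[OF W sub(2)] continuous_on_subset[OF cphi' sub(2)])
    have i2: "(\<lambda>u. W u * \<phi>' u) integrable_on {x..x+t}"
      by (intro integrable_continuous_interval continuous_intros continuous_on_subset[OF W sub(1)] continuous_on_subset[OF cphi' sub(1)])
    have i3: "(\<lambda>u. W (x + t) * \<phi>' u) integrable_on {x..x+t}"
      by (intro integrable_continuous_interval continuous_intros continuous_on_subset[OF cphi' sub(1)])
    have comb: "integral {a..x} (\<lambda>u. W u * \<phi>' u) + integral {x..x+t} (\<lambda>u. W u * \<phi>' u) = integral {a..x+t} (\<lambda>u. W u * \<phi>' u)"
      by (rule Henstock_Kurzweil_Integration.integral_combine) (use x t i1 in auto)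
    have ph: "integral {x..x+t} \<phi>' = \<phi> (x + t) - \<phi> x" by (rule int_phi') (use x t \<delta> in auto)
    have "integral {x..x + t} (\<lambda>u. (W (x + t) - W u) * \<phi>' u) = integral {x..x + t} (\<lambda>u. W (x + t) * \<phi>' u - W u * \<phi>' u)"
      by (simp add: algebra_simps)
    also have "\<dots> = W (x + t) * (\<phi> (x + t) - \<phi> x) - integral {x..x+t} (\<lambda>u. W u * \<phi>' u)"
      unfolding integral_diff[OF i3 i2] integral_mult_right ph ..
    finally show ?thesis unfolding E_def prodF_def using comb by (simp add: algebra_simps)
  qed
  show ?thesis unfolding eq
  proof (rule lap_small[OF \<delta>(1) cE])
    fix e :: real assume e: "e > 0"
    obtain B where B: "B \<ge> 0" "\<And>u. u \<in> {a..b} \<Longrightarrow> \<bar>\<phi>' u\<bar> \<le> B" using bound_phi' by blast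
    obtain d where d: "d > 0" "\<And>u v. u \<in> {a..b} \<Longrightarrow> v \<in> {a..b} \<Longrightarrow> \<bar>u - v\<bar> < d \<Longrightarrow> \<bar>W u - W v\<bar> < e / (B + 1)"
      using unif_W[OF W, of "e / (B + 1)"] e B by auto
    show "\<exists>\<eta>>0. \<forall>t\<in>{0..\<eta>}. \<bar>E t\<bar> \<le> e * t"
    proof (intro exI[of _ "min (d/2) \<delta>"] conjI ballI)
      show "min (d/2) \<delta> > 0" using d \<delta> by auto
      fix t assume t: "t \<in> {0..min (d/2) \<delta>}"
      have sub: "{x..x+t} \<subseteq> {a..b}" using t x \<delta> by auto
      have "\<bar>E t\<bar> = norm (integral {x..x + t} (\<lambda>u. (W (x + t) - W u) * \<phi>' u))" using Eint[of t] t by simp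
      also have "\<dots> \<le> (e / (B + 1) * B) * (x + t - x)"
      proof (rule integral_bound)
        show "continuous_on {x..x + t} (\<lambda>u. (W (x + t) - W u) * \<phi>' u)"
          by (intro continuous_intros continuous_on_subset[OF W sub] continuous_on_subset[OF cphi' sub])
        fix u assume u: "u \<in> {x..x + t}"
        have "\<bar>W (x + t) - W u\<bar> \<le> e / (B + 1)" using d(2)[of "x + t" u] u sub t d(1) by force
        moreover have "\<bar>\<phi>' u\<bar> \<le> B" using B u sub by auto
        ultimately have "\<bar>W (x + t) - W u\<bar> * \<bar>\<phi>' u\<bar> \<le> e / (B + 1) * B"
          by (intro mult_mono) (use e B in auto)
        then show "norm ((W (x + t) - W u) * \<phi>' u) \<le> e / (B + 1) * B"
          by (simp add: abs_mult)
      qed (use t in auto)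
      also have "\<dots> \<le> e * t"
      proof -
        have "e / (B + 1) * B \<le> e" using B e by (simp add: field_simps)
        then have "(e / (B + 1) * B) * t \<le> e * t" using t by (intro mult_right_mono) auto
        then show ?thesis by simp
      qed
      finally show "\<bar>E t\<bar> \<le> e * t" .
    qed
  qed
qed

end



context phi_C1 begin

lemma prod_left_core:
  assumes x: "x \<le> b" and \<delta>: "\<delta> > 0" "a \<le> x - \<delta>" and W: "continuous_on {a..b} W"
  shows "((\<lambda>s. lap_left (prodF a \<phi> \<phi>' W) x \<delta> s - \<phi> x * lap_left W x \<delta> s) \<longlongrightarrow> 0) at_top"
proof -
  let ?P = "prodF a \<phi> \<phi>' W"
  define E where "E = (\<lambda>t. (?P (x - t) - ?P x) - \<phi> x * (W (x - t) - W x))"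
  have cP: "continuous_on {0..\<delta>} (\<lambda>t. ?P (x - t))" by (rule cont_shift_left[OF cont_prodF[OF W] x \<delta>(2)])
  have cW: "continuous_on {0..\<delta>} (\<lambda>t. W (x - t))" by (rule cont_shift_left[OF W x \<delta>(2)])
  have cE: "continuous_on {0..\<delta>} E" unfolding E_def by (intro continuous_intros cP cW)
  have eq: "lap_left ?P x \<delta> s - \<phi> x * lap_left W x \<delta> s = - (s\<^sup>2 * integral {0..\<delta>} (\<lambda>t. exp (- s * t) * E t))" for s
  proof -
    have iP: "(\<lambda>t. exp (- s * t) * (?P (x - t) - ?P x)) integrable_on {0..\<delta>}"
      by (intro integrable_continuous_interval continuous_intros cP)
    have iW: "(\<lambda>t. \<phi> x * (exp (- s * t) * (W (x - t) - W x))) integrable_on {0..\<delta>}"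
      by (intro integrable_continuous_interval continuous_intros cW)
    have e: "(\<lambda>t. exp (- s * t) * E t) = (\<lambda>t. exp (- s * t) * (?P (x - t) - ?P x) - \<phi> x * (exp (- s * t) * (W (x - t) - W x)))"
      unfolding E_def by (auto simp: algebra_simps)
    show ?thesis unfolding lap_left_def e integral_diff[OF iP iW] integral_mult_right
      by (simp add: algebra_simps)
  qed
  have Eint: "E t = integral {x - t..x} (\<lambda>u. (W u - W (x - t)) * \<phi>' u)" if t: "t \<in> {0..\<delta>}" for t
  proof -
    have sub: "{x-t..x} \<subseteq> {a..b}" "{a..x} \<subseteq> {a..b}" using t x \<delta> by auto
    have i1: "(\<lambda>u. W u * \<phi>' u) integrable_on {a..x}"
      by (intro integrable_continuous_interval continuous_intros continuous_on_subset[OF W sub(2)] continuous_on_subset[OF cphi' sub(2)])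
    have i2: "(\<lambda>u. W u * \<phi>' u) integrable_on {x-t..x}"
      by (intro integrable_continuous_interval continuous_intros continuous_on_subset[OF W sub(1)] continuous_on_subset[OF cphi' sub(1)])
    have i3: "(\<lambda>u. W (x - t) * \<phi>' u) integrable_on {x-t..x}"
      by (intro integrable_continuous_interval continuous_intros continuous_on_subset[OF cphi' sub(1)])
    have comb: "integral {a..x-t} (\<lambda>u. W u * \<phi>' u) + integral {x-t..x} (\<lambda>u. W u * \<phi>' u) = integral {a..x} (\<lambda>u. W u * \<phi>' u)"
      by (rule Henstock_Kurzweil_Integration.integral_combine) (use x t \<delta> i1 in auto)
    have ph: "integral {x-t..x} \<phi>' = \<phi> x - \<phi> (x - t)" by (rule int_phi') (use x t \<delta> in auto)
    have "integral {x - t..x} (\<lambda>u. (W u - W (x - t)) * \<phi>' u) = integral {x - t..x} (\<lambda>u. W u * \<phi>' u - W (x - t) * \<phi>' u)"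
      by (simp add: algebra_simps)
    also have "\<dots> = integral {x-t..x} (\<lambda>u. W u * \<phi>' u) - W (x - t) * (\<phi> x - \<phi> (x - t))"
      unfolding integral_diff[OF i2 i3] integral_mult_right ph ..
    finally show ?thesis unfolding E_def prodF_def using comb by (simp add: algebra_simps)
  qed
  have "((\<lambda>s. s\<^sup>2 * integral {0..\<delta>} (\<lambda>t. exp (- s * t) * E t)) \<longlongrightarrow> 0) at_top"
  proof (rule lap_small[OF \<delta>(1) cE])
    fix e :: real assume e: "e > 0"
    obtain B where B: "B \<ge> 0" "\<And>u. u \<in> {a..b} \<Longrightarrow> \<bar>\<phi>' u\<bar> \<le> B" using bound_phi' by blast
    obtain d where d: "d > 0" "\<And>u v. u \<in> {a..b} \<Longrightarrow> v \<in> {a..b} \<Longrightarrow> \<bar>u - v\<bar> < d \<Longrightarrow> \<bar>W u - W v\<bar> < e / (B + 1)"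
      using unif_W[OF W, of "e / (B + 1)"] e B by auto
    show "\<exists>\<eta>>0. \<forall>t\<in>{0..\<eta>}. \<bar>E t\<bar> \<le> e * t"
    proof (intro exI[of _ "min (d/2) \<delta>"] conjI ballI)
      show "min (d/2) \<delta> > 0" using d \<delta> by auto
      fix t assume t: "t \<in> {0..min (d/2) \<delta>}"
      have sub: "{x-t..x} \<subseteq> {a..b}" using t x \<delta> by auto
      have "\<bar>E t\<bar> = norm (integral {x - t..x} (\<lambda>u. (W u - W (x - t)) * \<phi>' u))" using Eint[of t] t by simp
      also have "\<dots> \<le> (e / (B + 1) * B) * (x - (x - t))"
      proof (rule integral_bound)
        show "continuous_on {x - t..x} (\<lambda>u. (W u - W (x - t)) * \<phi>' u)"
          by (intro continuous_intros continuous_on_subset[OF W sub] continuous_on_subset[OF cphi' sub])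
        fix u assume u: "u \<in> {x - t..x}"
        have "\<bar>W u - W (x - t)\<bar> \<le> e / (B + 1)" using d(2)[of u "x - t"] u sub t d(1) by force
        moreover have "\<bar>\<phi>' u\<bar> \<le> B" using B u sub by auto
        ultimately have "\<bar>W u - W (x - t)\<bar> * \<bar>\<phi>' u\<bar> \<le> e / (B + 1) * B"
          by (intro mult_mono) (use e B in auto)
        then show "norm ((W u - W (x - t)) * \<phi>' u) \<le> e / (B + 1) * B"
          by (simp add: abs_mult)
      qed (use t in auto)
      also have "\<dots> \<le> e * t"
      proof -
        have "e / (B + 1) * B \<le> e" using B e by (simp add: field_simps)
        then have "(e / (B + 1) * B) * t \<le> e * t" using t by (intro mult_right_mono) auto
        then show ?thesis by simp
      qed
      finally show "\<bar>E t\<bar> \<le> e * t" .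
    qed
  qed
  then have "((\<lambda>s. - (s\<^sup>2 * integral {0..\<delta>} (\<lambda>t. exp (- s * t) * E t))) \<longlongrightarrow> - 0) at_top"
    by (rule tendsto_minus)
  then show ?thesis unfolding eq by simp
qed

end

lemma liminf_transfer:
  fixes X Y :: "real \<Rightarrow> real"
  assumes lim: "((\<lambda>s. Y s - p * X s) \<longlongrightarrow> 0) at_top" and p: "p > 0"
    and L: "ereal c \<le> Liminf at_top (\<lambda>s. ereal (X s))"
  shows "ereal (c * p) \<le> Liminf at_top (\<lambda>s. ereal (Y s))"
  unfolding le_Liminf_iff
proof (intro allI impI)
  fix y assume y: "y < ereal (c * p)"
  show "eventually (\<lambda>s. y < ereal (Y s)) at_top"
  proof (cases y)
    case (real y')
    define m where "m = (c * p - y') / 2"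
    have m: "m > 0" using y real unfolding m_def by auto
    have "ereal (c - m / p) < ereal c" using m p by simp
    then have ev1: "eventually (\<lambda>s. ereal (c - m / p) < ereal (X s)) at_top"
      using L unfolding le_Liminf_iff by blast
    have ev2: "eventually (\<lambda>s. dist (Y s - p * X s) 0 < m) at_top"
      using lim m by (rule tendstoD)
    show ?thesis using ev1 ev2
    proof eventually_elim
      case (elim s)
      have "c - m / p < X s" using elim by simp
      then have "p * (c - m / p) < p * X s" using p by (intro mult_strict_left_mono) auto
      then have "c * p - m < p * X s" using p by (simp add: algebra_simps)
      moreover have "Y s - p * X s > - m" using elim by (simp add: dist_real_def)
      ultimately have "y' < Y s" unfolding m_def by (smt (verit) field_sum_of_halves)
      then show ?case using real by simp
    qed
  next
    case PInf then show ?thesis using y by simp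
  next
    case MInf then show ?thesis by simp
  qed
qed

lemma limsup_transfer:
  fixes X Y :: "real \<Rightarrow> real"
  assumes lim: "((\<lambda>s. Y s - p * X s) \<longlongrightarrow> 0) at_top" and p: "p > 0"
    and L: "Limsup at_top (\<lambda>s. ereal (X s)) \<le> ereal c"
  shows "Limsup at_top (\<lambda>s. ereal (Y s)) \<le> ereal (c * p)"
  unfolding Limsup_le_iff
proof (intro allI impI)
  fix y assume y: "y > ereal (c * p)"
  show "eventually (\<lambda>s. y > ereal (Y s)) at_top"
  proof (cases y)
    case (real y')
    define m where "m = (y' - c * p) / 2"
    have m: "m > 0" using y real unfolding m_def by auto
    have "ereal (c + m / p) > ereal c" using m p by simp
    then have ev1: "eventually (\<lambda>s. ereal (c + m / p) > ereal (X s)) at_top"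
      using L unfolding Limsup_le_iff by blast
    have ev2: "eventually (\<lambda>s. dist (Y s - p * X s) 0 < m) at_top"
      using lim m by (rule tendstoD)
    show ?thesis using ev1 ev2
    proof eventually_elim
      case (elim s)
      have "X s < c + m / p" using elim by simp
      then have "p * X s < p * (c + m / p)" using p by (intro mult_strict_left_mono) auto
      then have "p * X s < c * p + m" using p by (simp add: algebra_simps)
      moreover have "Y s - p * X s < m" using elim by (simp add: dist_real_def)
      ultimately have "Y s < y'" unfolding m_def by (smt (verit) field_sum_of_halves)
      then show ?case using real by simp
    qed
  next
    case PInf then show ?thesis by simp
  next
    case MInf then show ?thesis using y by simp
  qed
qed

context phi_C1 begin

lemma prod_major:
  assumes ab: "a < b" and M: "laplace_major a b h W" and pos: "\<And>x. x \<in> {a..b} \<Longrightarrow> \<phi> x > 0"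
  shows "laplace_major a b (\<lambda>x. h x * \<phi> x) (prodF a \<phi> \<phi>' W)"
proof -
  have W: "continuous_on {a..b} W" using M unfolding laplace_major_def by auto
  have main: "ereal (h x * \<phi> x) \<le> lower_LD a b (prodF a \<phi> \<phi>' W) x" if x: "x \<in> {a..b}" for x
  proof -
    have hW: "ereal (h x) \<le> lower_LD a b W x" using M x unfolding laplace_major_def by auto
    have p: "\<phi> x > 0" using pos x by auto
    consider "x = a" | "x \<noteq> a" "x = b" | "x \<noteq> a" "x \<noteq> b" by blast
    then show ?thesis
    proof cases
      case 1
      then show ?thesis using hW unfolding lower_LD_def
        using liminf_transfer[OF prod_right_core[of x "b - a" W] p] x ab W by auto
    next
      case 2
      then show ?thesis using hW unfolding lower_LD_def
        using liminf_transfer[OF prod_left_core[of x "b - a" W] p] x ab W by auto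
    next
      case 3
      define \<delta> where "\<delta> = min (x - a) (b - x)"
      have d: "\<delta> > 0" "x + \<delta> \<le> b" "a \<le> x - \<delta>" using 3 x unfolding \<delta>_def by auto
      from 3 hW have h1: "ereal (h x) \<le> Liminf at_top (\<lambda>s. ereal (lap_right W x \<delta> s))"
        and h2: "ereal (h x) \<le> Liminf at_top (\<lambda>s. ereal (lap_left W x \<delta> s))"
        unfolding lower_LD_def \<delta>_def by auto
      have "ereal (h x * \<phi> x) \<le> Liminf at_top (\<lambda>s. ereal (lap_right (prodF a \<phi> \<phi>' W) x \<delta> s))"
        using liminf_transfer[OF prod_right_core[of x \<delta> W] p h1] x d W by auto
      moreover have "ereal (h x * \<phi> x) \<le> Liminf at_top (\<lambda>s. ereal (lap_left (prodF a \<phi> \<phi>' W) x \<delta> s))"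
        using liminf_transfer[OF prod_left_core[of x \<delta> W] p h2] x d W by auto
      ultimately show ?thesis using 3 unfolding lower_LD_def \<delta>_def by auto
    qed
  qed
  show ?thesis unfolding laplace_major_def
  proof (intro conjI ballI)
    show "continuous_on {a..b} (prodF a \<phi> \<phi>' W)" by (rule cont_prodF[OF W])
    fix x assume x: "x \<in> {a..b}"
    show "ereal (h x * \<phi> x) \<le> lower_LD a b (prodF a \<phi> \<phi>' W) x" by (rule main[OF x])
    show "lower_LD a b (prodF a \<phi> \<phi>' W) x > - \<infinity>"
      by (rule less_le_trans[OF _ main[OF x]]) simp
  qed
qed

lemma prod_minor:
  assumes ab: "a < b" and M: "laplace_minor a b h W" and pos: "\<And>x. x \<in> {a..b} \<Longrightarrow> \<phi> x > 0"
  shows "laplace_minor a b (\<lambda>x. h x * \<phi> x) (prodF a \<phi> \<phi>' W)"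
proof -
  have W: "continuous_on {a..b} W" using M unfolding laplace_minor_def by auto
  have main: "upper_LD a b (prodF a \<phi> \<phi>' W) x \<le> ereal (h x * \<phi> x)" if x: "x \<in> {a..b}" for x
  proof -
    have hW: "upper_LD a b W x \<le> ereal (h x)" using M x unfolding laplace_minor_def by auto
    have p: "\<phi> x > 0" using pos x by auto
    consider "x = a" | "x \<noteq> a" "x = b" | "x \<noteq> a" "x \<noteq> b" by blast
    then show ?thesis
    proof cases
      case 1
      then show ?thesis using hW unfolding upper_LD_def
        using limsup_transfer[OF prod_right_core[of x "b - a" W] p] x ab W by auto
    next
      case 2
      then show ?thesis using hW unfolding upper_LD_def
        using limsup_transfer[OF prod_left_core[of x "b - a" W] p] x ab W by auto
    next
      case 3
      define \<delta> where "\<delta> = min (x - a) (b - x)"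
      have d: "\<delta> > 0" "x + \<delta> \<le> b" "a \<le> x - \<delta>" using 3 x unfolding \<delta>_def by auto
      from 3 hW have h1: "Limsup at_top (\<lambda>s. ereal (lap_right W x \<delta> s)) \<le> ereal (h x)"
        and h2: "Limsup at_top (\<lambda>s. ereal (lap_left W x \<delta> s)) \<le> ereal (h x)"
        unfolding upper_LD_def \<delta>_def by auto
      have "Limsup at_top (\<lambda>s. ereal (lap_right (prodF a \<phi> \<phi>' W) x \<delta> s)) \<le> ereal (h x * \<phi> x)"
        using limsup_transfer[OF prod_right_core[of x \<delta> W] p h1] x d W by auto
      moreover have "Limsup at_top (\<lambda>s. ereal (lap_left (prodF a \<phi> \<phi>' W) x \<delta> s)) \<le> ereal (h x * \<phi> x)"
        using limsup_transfer[OF prod_left_core[of x \<delta> W] p h2] x d W by auto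
      ultimately show ?thesis using 3 unfolding upper_LD_def \<delta>_def by auto
    qed
  qed
  show ?thesis unfolding laplace_minor_def
  proof (intro conjI ballI)
    show "continuous_on {a..b} (prodF a \<phi> \<phi>' W)" by (rule cont_prodF[OF W])
    fix x assume x: "x \<in> {a..b}"
    show "upper_LD a b (prodF a \<phi> \<phi>' W) x \<le> ereal (h x * \<phi> x)" by (rule main[OF x])
    show "upper_LD a b (prodF a \<phi> \<phi>' W) x < \<infinity>"
      by (rule le_less_trans[OF main[OF x]]) simp
  qed
qed

end



definition Hfun :: "real \<Rightarrow> real \<Rightarrow> (real \<Rightarrow> real) \<Rightarrow> real \<Rightarrow> real" where
  "Hfun a b h x = Inf {W x - W a | W. laplace_major a b h W}"

lemma exists_pair:
  assumes int: "laplace_integrable a b h" and e: "e > 0"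
  shows "\<exists>W V. laplace_major a b h W \<and> laplace_minor a b h V \<and> (W b - W a) - (V b - V a) < e"
proof -
  obtain I where I: "laplace_upper a b h = ereal I" "laplace_lower a b h = ereal I"
    using int unfolding laplace_integrable_def by (cases "laplace_upper a b h") auto
  have "(INF W \<in> {W. laplace_major a b h W}. ereal (W b - W a)) < ereal (I + e / 2)"
    using I(1) e unfolding laplace_upper_def by simp
  then obtain W where W: "laplace_major a b h W" "W b - W a < I + e / 2"
    unfolding INF_less_iff by auto
  have "ereal (I - e / 2) < (SUP V \<in> {V. laplace_minor a b h V}. ereal (V b - V a))"
    using I(2) e unfolding laplace_lower_def by simp
  then obtain V where V: "laplace_minor a b h V" "I - e / 2 < V b - V a"
    unfolding less_SUP_iff by auto
  show ?thesis using W V by (intro exI[of _ W] exI[of _ V]) auto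
qed

lemma H_bounds:
  assumes int: "laplace_integrable a b h" and W: "laplace_major a b h W" and V: "laplace_minor a b h V"
    and x: "x \<in> {a..b}"
  shows "V x - V a \<le> Hfun a b h x" "Hfun a b h x \<le> W x - W a"
    and "(W x - W a) - Hfun a b h x \<le> (W b - W a) - (V b - V a)"
    and "Hfun a b h x - (V x - V a) \<le> (W b - W a) - (V b - V a)"
proof -
  have lb: "V x - V a \<le> W' x - W' a" if "laplace_major a b h W'" for W'
    using major_minor_mono[where c=a and d=x, OF that V] x by auto
  have bdd: "bdd_below {W x - W a | W. laplace_major a b h W}"
    using lb unfolding bdd_below_def by auto
  show 1: "Hfun a b h x \<le> W x - W a" unfolding Hfun_def
    by (rule cInf_lower[OF _ bdd]) (use W in auto)
  show 2: "V x - V a \<le> Hfun a b h x" unfolding Hfun_def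
    by (rule cInf_greatest) (use W lb in auto)
  have "V b - V x \<le> W b - W x" using major_minor_mono[OF W V, of x b] x by auto
  then show "(W x - W a) - Hfun a b h x \<le> (W b - W a) - (V b - V a)"
    and "Hfun a b h x - (V x - V a) \<le> (W b - W a) - (V b - V a)" using 1 2 by auto
qed

lemma H_cont:
  assumes int: "laplace_integrable a b h"
  shows "continuous_on {a..b} (Hfun a b h)"
  unfolding continuous_on_iff
proof (intro ballI allI impI)
  fix x e :: real assume x: "x \<in> {a..b}" and e: "e > 0"
  obtain W V where WV: "laplace_major a b h W" "laplace_minor a b h V" "(W b - W a) - (V b - V a) < e / 3"
    using exists_pair[OF int, of "e/3"] e by auto
  have cW: "continuous_on {a..b} W" using WV unfolding laplace_major_def by auto
  obtain d where d: "d > 0" "\<forall>x'\<in>{a..b}. dist x' x < d \<longrightarrow> dist (W x') (W x) < e / 3"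
    using cW x e unfolding continuous_on_iff by (metis divide_pos_pos zero_less_numeral)
  show "\<exists>d>0. \<forall>x'\<in>{a..b}. dist x' x < d \<longrightarrow> dist (Hfun a b h x') (Hfun a b h x) < e"
  proof (intro exI[of _ d] conjI ballI impI)
    fix x' assume x': "x' \<in> {a..b}" "dist x' x < d"
    have 1: "\<bar>W x' - W x\<bar> < e / 3" using d x' by (auto simp: dist_real_def)
    then have 11: "W x' - W x < e / 3" "W x - W x' < e / 3" unfolding abs_less_iff by auto
    note b1 = H_bounds[OF int WV(1,2) x] and b2 = H_bounds[OF int WV(1,2) x'(1)]
    have "Hfun a b h x' - Hfun a b h x < e" using 11 b1 b2 WV(3) by linarith
    moreover have "Hfun a b h x - Hfun a b h x' < e" using 11 b1 b2 WV(3) by linarith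
    ultimately show "dist (Hfun a b h x') (Hfun a b h x) < e"
      unfolding dist_real_def by (simp add: abs_less_iff)
  qed (use d in auto)
qed

context phi_C1 begin

definition Aop :: "(real \<Rightarrow> real) \<Rightarrow> real" where
  "Aop F = F b * \<phi> b - integral {a..b} (\<lambda>u. F u * \<phi>' u)"

lemma Aop_diff:
  assumes "continuous_on {a..b} F" "continuous_on {a..b} G"
  shows "Aop (\<lambda>u. F u - G u) = Aop F - Aop G"
proof -
  have iF: "(\<lambda>u. F u * \<phi>' u) integrable_on {a..b}"
    by (intro integrable_continuous_interval continuous_intros assms cphi')
  have iG: "(\<lambda>u. G u * \<phi>' u) integrable_on {a..b}"
    by (intro integrable_continuous_interval continuous_intros assms cphi')
  have "(\<lambda>u. (F u - G u) * \<phi>' u) = (\<lambda>u. F u * \<phi>' u - G u * \<phi>' u)" by (auto simp: algebra_simps)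
  then show ?thesis unfolding Aop_def using integral_diff[OF iF iG] by (simp add: algebra_simps)
qed

lemma Aop_const:
  assumes "a \<le> b"
  shows "Aop (\<lambda>u. c) = c * \<phi> a"
proof -
  have hI: "integral {a..b} \<phi>' = \<phi> b - \<phi> a" using int_phi'[of a b] assms by auto
  show ?thesis unfolding Aop_def integral_mult_right hI by (simp add: algebra_simps)
qed

lemma prodF_Aop:
  assumes "a \<le> b"
  shows "prodF a \<phi> \<phi>' W b - prodF a \<phi> \<phi>' W a = Aop W - W a * \<phi> a"
  unfolding prodF_def Aop_def by simp

lemma Aop_bound:
  assumes ab: "a \<le> b" and F: "continuous_on {a..b} F" and d: "\<And>u. u \<in> {a..b} \<Longrightarrow> \<bar>F u\<bar> \<le> d"
    and B: "B \<ge> 0" "\<And>u. u \<in> {a..b} \<Longrightarrow> \<bar>\<phi>' u\<bar> \<le> B"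
  shows "\<bar>Aop F\<bar> \<le> d * (\<bar>\<phi> b\<bar> + B * (b - a))"
proof -
  have d0: "d \<ge> 0" using d[of a] ab by auto
  have 1: "\<bar>F b * \<phi> b\<bar> \<le> d * \<bar>\<phi> b\<bar>" using d[of b] ab by (simp add: abs_mult mult_right_mono)
  have "norm (integral {a..b} (\<lambda>u. F u * \<phi>' u)) \<le> (d * B) * (b - a)"
  proof (rule integral_bound[OF ab])
    show "continuous_on {a..b} (\<lambda>u. F u * \<phi>' u)" by (intro continuous_intros F cphi')
    fix t assume t: "t \<in> {a..b}"
    show "norm (F t * \<phi>' t) \<le> d * B"
      using d[OF t] B(2)[OF t] d0 B(1) by (simp add: abs_mult mult_mono)
  qed
  then have 2: "\<bar>integral {a..b} (\<lambda>u. F u * \<phi>' u)\<bar> \<le> d * B * (b - a)" by simp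
  show ?thesis unfolding Aop_def using 1 2 by (simp add: algebra_simps)
qed

lemma main_abstract:
  assumes ab: "a < b" and int: "laplace_integrable a b h" and pos: "\<And>x. x \<in> {a..b} \<Longrightarrow> \<phi> x > 0"
  shows "laplace_integrable a b (\<lambda>x. h x * \<phi> x)"
    and "laplace_integral a b (\<lambda>x. h x * \<phi> x) = Aop (Hfun a b h)"
proof -
  let ?H = "Hfun a b h"
  have cH: "continuous_on {a..b} ?H" by (rule H_cont[OF int])
  obtain B where B: "B \<ge> 0" "\<And>u. u \<in> {a..b} \<Longrightarrow> \<bar>\<phi>' u\<bar> \<le> B" using bound_phi' by blast
  define C where "C = \<bar>\<phi> b\<bar> + B * (b - a)"
  have C: "C \<ge> 0" unfolding C_def using B ab by auto
  have key: "ereal (Aop ?H - C * ((W b - W a) - (V b - V a))) \<le> laplace_lower a b (\<lambda>x. h x * \<phi> x) \<and>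
             laplace_upper a b (\<lambda>x. h x * \<phi> x) \<le> ereal (Aop ?H + C * ((W b - W a) - (V b - V a)))"
    if W: "laplace_major a b h W" and V: "laplace_minor a b h V" for W V
  proof -
    define g where "g = (W b - W a) - (V b - V a)"
    have cW: "continuous_on {a..b} W" using W unfolding laplace_major_def by auto
    have cV: "continuous_on {a..b} V" using V unfolding laplace_minor_def by auto
    have bW: "\<bar>W u - W a - ?H u\<bar> \<le> g" if "u \<in> {a..b}" for u
      using H_bounds[OF int W V that] unfolding g_def by auto
    have bV: "\<bar>?H u - (V u - V a)\<bar> \<le> g" if "u \<in> {a..b}" for u
      using H_bounds[OF int W V that] unfolding g_def by auto
    have c1: "continuous_on {a..b} (\<lambda>u. W u - W a - ?H u)" by (intro continuous_intros cW cH)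
    have c2: "continuous_on {a..b} (\<lambda>u. ?H u - (V u - V a))" by (intro continuous_intros cV cH)
    have A1: "\<bar>Aop (\<lambda>u. W u - W a - ?H u)\<bar> \<le> g * C"
      unfolding C_def by (rule Aop_bound[OF _ c1 bW B]) (use ab in auto)
    have A2: "\<bar>Aop (\<lambda>u. ?H u - (V u - V a))\<bar> \<le> g * C"
      unfolding C_def by (rule Aop_bound[OF _ c2 bV B]) (use ab in auto)
    have cWa: "continuous_on {a..b} (\<lambda>u. W u - W a)" by (intro continuous_intros cW)
    have cVa: "continuous_on {a..b} (\<lambda>u. V u - V a)" by (intro continuous_intros cV)
    have cc: "continuous_on {a..b} (\<lambda>u. c)" for c :: real by (rule continuous_on_const)
    have e1: "Aop (\<lambda>u. W u - W a - ?H u) = Aop W - W a * \<phi> a - Aop ?H"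
      using Aop_diff[OF cWa cH] Aop_diff[OF cW cc[of "W a"]] Aop_const[of "W a"] ab by simp
    have e2: "Aop (\<lambda>u. ?H u - (V u - V a)) = Aop ?H - (Aop V - V a * \<phi> a)"
      using Aop_diff[OF cH cVa] Aop_diff[OF cV cc[of "V a"]] Aop_const[of "V a"] ab by simp
    have up: "laplace_upper a b (\<lambda>x. h x * \<phi> x) \<le> ereal (prodF a \<phi> \<phi>' W b - prodF a \<phi> \<phi>' W a)"
      unfolding laplace_upper_def by (rule INF_lower) (use prod_major[OF ab W pos] in auto)
    have lo: "ereal (prodF a \<phi> \<phi>' V b - prodF a \<phi> \<phi>' V a) \<le> laplace_lower a b (\<lambda>x. h x * \<phi> x)"
      unfolding laplace_lower_def by (rule SUP_upper) (use prod_minor[OF ab V pos] in auto)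
    have "prodF a \<phi> \<phi>' W b - prodF a \<phi> \<phi>' W a \<le> Aop ?H + C * g"
      using prodF_Aop[of W] A1 e1 ab by (simp add: algebra_simps abs_le_iff)
    moreover have "Aop ?H - C * g \<le> prodF a \<phi> \<phi>' V b - prodF a \<phi> \<phi>' V a"
      using prodF_Aop[of V] A2 e2 ab by (simp add: algebra_simps abs_le_iff)
    ultimately have u1: "ereal (prodF a \<phi> \<phi>' W b - prodF a \<phi> \<phi>' W a) \<le> ereal (Aop ?H + C * g)"
      and l1: "ereal (Aop ?H - C * g) \<le> ereal (prodF a \<phi> \<phi>' V b - prodF a \<phi> \<phi>' V a)" by simp_all
    show ?thesis using order_trans[OF up u1] order_trans[OF l1 lo] unfolding g_def by simp
  qed
  have lu: "laplace_lower a b (\<lambda>x. h x * \<phi> x) \<le> laplace_upper a b (\<lambda>x. h x * \<phi> x)"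
    unfolding laplace_lower_def laplace_upper_def
  proof (rule SUP_least, rule INF_greatest)
    fix V W assume "V \<in> {V. laplace_minor a b (\<lambda>x. h x * \<phi> x) V}" "W \<in> {W. laplace_major a b (\<lambda>x. h x * \<phi> x) W}"
    then show "ereal (V b - V a) \<le> ereal (W b - W a)"
      using major_minor_mono[of a b _ W V a b] ab by auto
  qed
  have U: "laplace_upper a b (\<lambda>x. h x * \<phi> x) \<le> ereal (Aop ?H)"
  proof (rule ereal_le_epsilon2)
    fix e :: real assume e: "e > 0"
    obtain W V where WV: "laplace_major a b h W" "laplace_minor a b h V" "(W b - W a) - (V b - V a) < e / (C + 1)"
      using exists_pair[OF int, of "e / (C + 1)"] e C by auto
    have "C * ((W b - W a) - (V b - V a)) \<le> e"
    proof -
      have "C * ((W b - W a) - (V b - V a)) \<le> (C + 1) * (e / (C + 1))"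
        using WV(3) C major_minor_mono[OF WV(1,2), of a b] ab
        by (intro mult_mono) auto
      then show ?thesis using C by simp
    qed
    then have "ereal (Aop ?H + C * ((W b - W a) - (V b - V a))) \<le> ereal (Aop ?H) + ereal e" by simp
    with key[OF WV(1,2)] show "laplace_upper a b (\<lambda>x. h x * \<phi> x) \<le> ereal (Aop ?H) + ereal e"
      by (meson order_trans)
  qed
  have L: "ereal (Aop ?H) \<le> laplace_lower a b (\<lambda>x. h x * \<phi> x)"
  proof (rule ereal_le_epsilon2)
    fix e :: real assume e: "e > 0"
    obtain W V where WV: "laplace_major a b h W" "laplace_minor a b h V" "(W b - W a) - (V b - V a) < e / (C + 1)"
      using exists_pair[OF int, of "e / (C + 1)"] e C by auto
    have "C * ((W b - W a) - (V b - V a)) \<le> e"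
    proof -
      have "C * ((W b - W a) - (V b - V a)) \<le> (C + 1) * (e / (C + 1))"
        using WV(3) C major_minor_mono[OF WV(1,2), of a b] ab
        by (intro mult_mono) auto
      then show ?thesis using C by simp
    qed
    then have "ereal (Aop ?H) \<le> ereal (Aop ?H - C * ((W b - W a) - (V b - V a))) + ereal e" by simp
    also have "\<dots> \<le> laplace_lower a b (\<lambda>x. h x * \<phi> x) + ereal e"
      using key[OF WV(1,2)] by (intro add_right_mono) auto
    finally show "ereal (Aop ?H) \<le> laplace_lower a b (\<lambda>x. h x * \<phi> x) + ereal e" .
  qed
  have eqU: "laplace_upper a b (\<lambda>x. h x * \<phi> x) = ereal (Aop ?H)" using U L lu by auto
  have eqL: "laplace_lower a b (\<lambda>x. h x * \<phi> x) = ereal (Aop ?H)" using U L lu by auto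
  show "laplace_integrable a b (\<lambda>x. h x * \<phi> x)" unfolding laplace_integrable_def eqU eqL by simp
  show "laplace_integral a b (\<lambda>x. h x * \<phi> x) = Aop ?H" unfolding laplace_integral_def eqU by simp
qed

end



definition kk :: "complex \<Rightarrow> real \<Rightarrow> complex" where
  "kk z t = (cis t + z) / (cis t - z)"
definition kt :: "complex \<Rightarrow> real \<Rightarrow> complex" where
  "kt z t = - 2 * \<i> * z * cis t / (cis t - z) ^ 2"
definition kz :: "complex \<Rightarrow> real \<Rightarrow> complex" where
  "kz z t = - 2 * \<i> * cis t * (cis t + z) / (cis t - z) ^ 3"

lemma cis_ne: "cmod z < 1 \<Longrightarrow> cis t - z \<noteq> 0"
  by (metis norm_cis order_less_irrefl right_minus_eq)

lemma exp_ne: "cmod z < 1 \<Longrightarrow> exp (\<i> * complex_of_real t) - z \<noteq> 0"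
  using cis_ne[of z t] by (simp add: cis_conv_exp)

lemma deriv_t:
  assumes z: "cmod z < 1"
  shows "((\<lambda>t. Re (kk z t)) has_real_derivative Re (kt z t)) (at t)"
proof -
  define g where "g = (\<lambda>w. (exp (\<i> * w) + z) / (exp (\<i> * w) - z))"
  have g': "(g has_field_derivative kt z t) (at (complex_of_real t))"
    unfolding g_def
    apply (rule derivative_eq_intros refl | simp add: exp_ne[OF z])+
    using exp_ne[OF z, of t] unfolding kt_def cis_conv_exp
    apply (simp add: divide_simps)
    apply algebra
    done
  have of: "((\<lambda>t. complex_of_real t) has_vector_derivative 1) (at t)"
    using has_vector_derivative_of_real[OF DERIV_ident[of "at t"]] by simp
  have "((g \<circ> complex_of_real) has_vector_derivative (1 * kt z t)) (at t)"
    by (rule field_vector_diff_chain_at[OF of g'])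
  then have "((\<lambda>t. kk z t) has_vector_derivative kt z t) (at t)"
    by (simp add: o_def g_def kk_def cis_conv_exp)
  then have "((\<lambda>t. Re (kk z t)) has_vector_derivative Re (kt z t)) (at t)"
    by (rule bounded_linear.has_vector_derivative[OF bounded_linear_Re])
  then show ?thesis by (simp add: has_real_derivative_iff_has_vector_derivative)
qed

lemma poisson_eq:
  assumes z: "z = complex_of_real r * cis \<theta>"
  shows "Re (kk z t) = poisson_kernel r (\<theta> - t)"
proof -
  have s1: "(sin t)\<^sup>2 + (cos t)\<^sup>2 = 1" "(sin \<theta>)\<^sup>2 + (cos \<theta>)\<^sup>2 = 1" by simp_all
  have e: "Re (cis t + z) = cos t + r * cos \<theta>" "Re (cis t - z) = cos t - r * cos \<theta>"
    "Im (cis t + z) = sin t + r * sin \<theta>" "Im (cis t - z) = sin t - r * sin \<theta>"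
    unfolding z by simp_all
  have num: "Re (cis t + z) * Re (cis t - z) + Im (cis t + z) * Im (cis t - z) = 1 - r\<^sup>2"
    unfolding e using s1 by algebra
  have den: "(Re (cis t - z))\<^sup>2 + (Im (cis t - z))\<^sup>2 = 1 - 2 * r * cos (\<theta> - t) + r\<^sup>2"
    unfolding e cos_diff using s1 by algebra
  show ?thesis unfolding kk_def Re_divide num den poisson_kernel_def ..
qed

lemma poisson_pos:
  assumes "0 \<le> r" "r < 1"
  shows "poisson_kernel r u > 0"
proof -
  have "r * cos u \<le> r" using assms by (intro mult_left_le) auto
  then have "2 * r * cos u \<le> 2 * r" by simp
  then have d1: "1 - 2 * r * cos u + r\<^sup>2 \<ge> (1 - r)\<^sup>2" by (simp add: power2_eq_square algebra_simps)
  have d2: "(1 - r)\<^sup>2 > 0" using assms by simp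
  have "1 - 2 * r * cos u + r\<^sup>2 > 0" using d1 d2 by linarith
  moreover have "1 - r\<^sup>2 > 0"
  proof -
    have "r * r \<le> r" using assms by (intro mult_left_le) auto
    then show ?thesis using assms by (simp add: power2_eq_square)
  qed
  ultimately show ?thesis unfolding poisson_kernel_def by (intro divide_pos_pos) auto
qed

lemma cont_kt:
  assumes "cmod z < 1"
  shows "continuous_on S (\<lambda>t. Re (kt z t))"
  unfolding kt_def cis_conv_exp
  by (intro continuous_intros) (use exp_ne[OF assms] in auto)

lemma kz_alg:
  fixes c z :: complex
  assumes ne: "c - z \<noteq> 0"
  shows "(((0 * z + 1 * (- 2 * \<i>)) * c + 0 * (- 2 * \<i> * z)) * (c - z)\<^sup>2 -
      - 2 * \<i> * z * c *  (complex_of_nat 2 * ((0 - 1) * (c - z) ^ (2 - Suc 0)))) /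
     ((c - z)\<^sup>2 * (c - z)\<^sup>2) =   - 2 * \<i> * c * (c + z) /  (c - z) ^ 3"
proof -
  have "(((0 * z + 1 * (- 2 * \<i>)) * c + 0 * (- 2 * \<i> * z)) * (c - z)\<^sup>2 -
      - 2 * \<i> * z * c *  (complex_of_nat 2 * ((0 - 1) * (c - z) ^ (2 - Suc 0)))) =
      (- 2 * \<i> * c * (c + z)) * (c - z)"
    by (simp add: algebra_simps power2_eq_square)
  also have "\<dots> / ((c - z)\<^sup>2 * (c - z)\<^sup>2) = - 2 * \<i> * c * (c + z) /  (c - z) ^ 3"
  proof -
    have "(c - z)\<^sup>2 * (c - z)\<^sup>2 = (c - z) ^ 3 * (c - z)" by (simp add: power2_eq_square power3_eq_cube)
    then show ?thesis using mult_divide_mult_cancel_right[OF ne] by simp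
  qed
  finally show ?thesis .
qed

lemma kz_alg2:
  fixes c z :: complex
  assumes ne: "c - z \<noteq> 0"
  shows "(2 * \<i> * z * c * (2 * z - 2 * c) - 2 * \<i> * c * (c - z)\<^sup>2) / (c - z) ^ 4 =
     - (2 * \<i> * c * (c + z) / (c - z) ^ 3)"
proof -
  have "2 * \<i> * z * c * (2 * z - 2 * c) - 2 * \<i> * c * (c - z)\<^sup>2 = (- (2 * \<i> * c * (c + z))) * (c - z)"
    by (simp add: algebra_simps power2_eq_square)
  moreover have "(c - z) ^ 4 = (c - z) ^ 3 * (c - z)" by (simp add: power_Suc2 numeral_eq_Suc)
  ultimately show ?thesis using mult_divide_mult_cancel_right[OF ne] by simp
qed

lemma deriv_z:
  assumes z: "cmod z < 1"
  shows "((\<lambda>z. kt z t) has_field_derivative kz z t) (at z within U)"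
proof -
  have ne: "cis t - z \<noteq> 0" by (rule cis_ne[OF z])
  then have ne2: "cis t \<noteq> z" by simp
  show ?thesis
    unfolding kt_def kz_def
    apply (rule derivative_eq_intros refl | simp add: ne ne2)+
    apply (rule kz_alg2[OF ne])
    done
qed

lemma phi_inst:
  assumes r: "0 \<le> r" "r < 1" and z: "z = complex_of_real r * cis \<theta>"
  shows "phi_C1 a b (\<lambda>t. poisson_kernel r (\<theta> - t)) (\<lambda>t. Re (kt z t))"
proof
  have zn: "cmod z < 1" using r z by (simp add: norm_mult)
  have e: "(\<lambda>t. poisson_kernel r (\<theta> - t)) = (\<lambda>t. Re (kk z t))" using poisson_eq[OF z] by simp
  show "((\<lambda>t. poisson_kernel r (\<theta> - t)) has_real_derivative Re (kt z t)) (at t)" for t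
    unfolding e by (rule deriv_t[OF zn])
  show "continuous_on {a..b} (\<lambda>t. Re (kt z t))" by (rule cont_kt[OF zn])
qed

lemma pd:
  assumes "(F has_field_derivative D) (at z)"
  shows "has_pdx (\<lambda>z. Re (F z)) (Re D) z" "has_pdy (\<lambda>z. Re (F z)) (Re (\<i> * D)) z"
proof -
  have a1: "((\<lambda>t. z + complex_of_real t) has_vector_derivative 1) (at 0)"
    using has_vector_derivative_of_real[OF DERIV_ident[of "at 0"]]
    by (auto intro!: derivative_eq_intros)
  have F1: "(F has_field_derivative D) (at (z + complex_of_real 0))" using assms by simp
  have "((F \<circ> (\<lambda>t. z + complex_of_real t)) has_vector_derivative (1 * D)) (at 0)"
    by (rule field_vector_diff_chain_at[OF a1 F1])
  then have X1: "((F \<circ> (\<lambda>t. z + complex_of_real t)) has_vector_derivative D) (at 0)" by simp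
  have "((\<lambda>x. Re ((F \<circ> (\<lambda>t. z + complex_of_real t)) x)) has_vector_derivative Re D) (at 0)"
    by (rule bounded_linear.has_vector_derivative[OF bounded_linear_Re X1])
  then show "has_pdx (\<lambda>z. Re (F z)) (Re D) z"
    unfolding has_pdx_def o_def has_real_derivative_iff_has_vector_derivative .
  have a2: "((\<lambda>t. z + \<i> * complex_of_real t) has_vector_derivative \<i>) (at 0)"
    using has_vector_derivative_of_real[OF DERIV_ident[of "at 0"]]
    by (auto intro!: derivative_eq_intros)
  have F2: "(F has_field_derivative D) (at (z + \<i> * complex_of_real 0))" using assms by simp
  have X2: "((F \<circ> (\<lambda>t. z + \<i> * complex_of_real t)) has_vector_derivative (\<i> * D)) (at 0)"
    by (rule field_vector_diff_chain_at[OF a2 F2])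
  have "((\<lambda>x. Re ((F \<circ> (\<lambda>t. z + \<i> * complex_of_real t)) x)) has_vector_derivative Re (\<i> * D)) (at 0)"
    by (rule bounded_linear.has_vector_derivative[OF bounded_linear_Re X2])
  then show "has_pdy (\<lambda>z. Re (F z)) (Re (\<i> * D)) z"
    unfolding has_pdy_def o_def has_real_derivative_iff_has_vector_derivative .
qed

lemma harmonic_Re:
  assumes "w holomorphic_on ball 0 1"
  shows "harmonic_on (ball 0 1) (\<lambda>z. Re (w z))"
proof -
  define w1 where "w1 = deriv w"
  define w2 where "w2 = deriv w1"
  have h1: "w1 holomorphic_on ball 0 1" unfolding w1_def by (intro holomorphic_deriv assms) auto
  have h2: "w2 holomorphic_on ball 0 1" unfolding w2_def by (intro holomorphic_deriv h1) auto
  have d0: "(w has_field_derivative w1 z) (at z)" if "z \<in> ball 0 1" for z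
    unfolding w1_def by (rule holomorphic_derivI[OF assms _ that]) auto
  have d1: "(w1 has_field_derivative w2 z) (at z)" if "z \<in> ball 0 1" for z
    unfolding w2_def by (rule holomorphic_derivI[OF h1 _ that]) auto
  have d1': "((\<lambda>z. \<i> * w1 z) has_field_derivative \<i> * w2 z) (at z)" if "z \<in> ball 0 1" for z
    using d1[OF that] by (auto intro!: derivative_eq_intros)
  have c0: "continuous_on (ball 0 1) w" by (rule holomorphic_on_imp_continuous_on[OF assms])
  have c1: "continuous_on (ball 0 1) w1" by (rule holomorphic_on_imp_continuous_on[OF h1])
  have c2: "continuous_on (ball 0 1) w2" by (rule holomorphic_on_imp_continuous_on[OF h2])
  define ux where "ux = (\<lambda>z. Re (w1 z))"
  define uy where "uy = (\<lambda>z. Re (\<i> * w1 z))"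
  define uxx where "uxx = (\<lambda>z. Re (w2 z))"
  define uxy where "uxy = (\<lambda>z. Re (\<i> * w2 z))"
  define uyy where "uyy = (\<lambda>z. Re (\<i> * (\<i> * w2 z)))"
  have P: "(\<forall>z\<in>ball 0 1. has_pdx (\<lambda>z. Re (w z)) (ux z) z \<and> has_pdy (\<lambda>z. Re (w z)) (uy z) z \<and>
                has_pdx ux (uxx z) z \<and> has_pdy ux (uxy z) z \<and>
                has_pdx uy (uxy z) z \<and> has_pdy uy (uyy z) z \<and>
                uxx z + uyy z = 0) \<and>
        continuous_on (ball 0 1) (\<lambda>z. Re (w z)) \<and> continuous_on (ball 0 1) ux \<and> continuous_on (ball 0 1) uy \<and>
        continuous_on (ball 0 1) uxx \<and> continuous_on (ball 0 1) uxy \<and>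
        continuous_on (ball 0 1) uxy \<and> continuous_on (ball 0 1) uyy"
  proof (intro conjI ballI)
    fix z :: complex assume z: "z \<in> ball 0 1"
    show "has_pdx (\<lambda>z. Re (w z)) (ux z) z" unfolding ux_def by (rule pd(1)[OF d0[OF z]])
    show "has_pdy (\<lambda>z. Re (w z)) (uy z) z" unfolding uy_def by (rule pd(2)[OF d0[OF z]])
    show "has_pdx ux (uxx z) z" unfolding ux_def uxx_def by (rule pd(1)[OF d1[OF z]])
    show "has_pdy ux (uxy z) z" unfolding ux_def uxy_def by (rule pd(2)[OF d1[OF z]])
    show "has_pdx uy (uxy z) z" unfolding uy_def uxy_def by (rule pd(1)[OF d1'[OF z]])
    show "has_pdy uy (uyy z) z" unfolding uy_def uyy_def by (rule pd(2)[OF d1'[OF z]])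
    show "uxx z + uyy z = 0" unfolding uxx_def uyy_def by simp
  qed (unfold ux_def uy_def uxx_def uxy_def uyy_def, (intro continuous_intros c0 c1 c2)+)
  show ?thesis unfolding harmonic_on_def using P by blast
qed




lemma cont_kt_c:
  assumes "cmod z < 1"
  shows "continuous_on S (\<lambda>t. kt z t)"
  unfolding kt_def cis_conv_exp
  by (intro continuous_intros) (use exp_ne[OF assms] in auto)

theorem theorem10p2:
  fixes f :: "complex \<Rightarrow> real"
  defines "G \<equiv> (\<lambda>t. f (cis t))"
  assumes "laplace_integrable (-pi) pi G"
  shows "(\<forall>r\<in>{0..<1}. \<forall>\<theta>\<in>{-pi..pi}.
            laplace_integrable (-pi) pi (\<lambda>t. G t * poisson_kernel r (\<theta> - t)))
       \<and> (\<exists>u. harmonic_on (ball 0 1) u \<and>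
            (\<forall>r\<in>{0..<1}. \<forall>\<theta>\<in>{-pi..pi}.
               u (complex_of_real r * cis \<theta>) =
                 1 / (2 * pi) * laplace_integral (-pi) pi (\<lambda>t. G t * poisson_kernel r (\<theta> - t))))"
proof -
  note int = assms(2)
  have ab: "- pi < pi" by simp
  define H where "H = Hfun (-pi) pi G"
  have cH: "continuous_on {-pi..pi} H" unfolding H_def by (rule H_cont[OF int])
  have inst: "phi_C1 (-pi) pi (\<lambda>t. poisson_kernel r (\<theta> - t)) (\<lambda>t. Re (kt (complex_of_real r * cis \<theta>) t))"
    if "r \<in> {0..<1}" for r \<theta>
    by (rule phi_inst) (use that in auto)
  have pos: "\<And>x. x \<in> {-pi..pi} \<Longrightarrow> poisson_kernel r (\<theta> - x) > 0" if "r \<in> {0..<1}" for r \<theta>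
    using poisson_pos that by auto
  have P1: "laplace_integrable (-pi) pi (\<lambda>t. G t * poisson_kernel r (\<theta> - t))"
    and P2: "laplace_integral (-pi) pi (\<lambda>t. G t * poisson_kernel r (\<theta> - t)) =
       phi_C1.Aop (-pi) pi (\<lambda>t. poisson_kernel r (\<theta> - t)) (\<lambda>t. Re (kt (complex_of_real r * cis \<theta>) t)) H"
    if r: "r \<in> {0..<1}" for r \<theta>
    using phi_C1.main_abstract[OF inst[OF r] ab int pos[OF r]] unfolding H_def by auto
  define gI where "gI = (\<lambda>z. integral {-pi..pi} (\<lambda>t. complex_of_real (H t) * kt z t))"
  define g where "g = (\<lambda>z. (complex_of_real (H pi) * kk z pi - gI z) / complex_of_real (2 * pi))"
  have intI: "(\<lambda>t. complex_of_real (H t) * kt z t) integrable_on {-pi..pi}" if "cmod z < 1" for z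
    by (intro integrable_continuous_interval continuous_intros cH cont_kt_c that)
  have hgI: "gI holomorphic_on ball 0 1"
  proof -
    have "(\<lambda>z. integral (cbox (-pi) pi) (\<lambda>t. complex_of_real (H t) * kt z t)) holomorphic_on ball 0 1"
    proof (rule leibniz_rule_holomorphic[where fx = "\<lambda>z t. complex_of_real (H t) * kz z t"])
      fix z t assume z: "z \<in> ball (0::complex) 1" and "t \<in> cbox (-pi) pi"
      have zn: "cmod z < 1" using z by simp
      show "((\<lambda>z. complex_of_real (H t) * kt z t) has_field_derivative complex_of_real (H t) * kz z t) (at z within ball 0 1)"
        by (rule DERIV_cmult[OF deriv_z[OF zn]])
    next
      fix z assume z: "z \<in> ball (0::complex) 1"
      show "(\<lambda>t. complex_of_real (H t) * kt z t) integrable_on cbox (-pi) pi"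
        unfolding box_real(2) by (rule intI) (use z in simp)
    next
      have cH2: "continuous_on (ball 0 1 \<times> {-pi..pi}) (\<lambda>p. H (snd p))"
        by (rule continuous_on_compose2[OF cH continuous_on_snd]) auto
      have ne: "\<forall>p\<in>ball 0 1 \<times> {-pi..pi}. exp (\<i> * complex_of_real (snd p)) - fst p \<noteq> 0"
        using exp_ne by auto
      have "continuous_on (ball 0 1 \<times> {-pi..pi}) (\<lambda>p. complex_of_real (H (snd p)) * kz (fst p) (snd p))"
        unfolding kz_def cis_conv_exp
        by (intro continuous_intros cH2) (use ne in auto)
      then show "continuous_on (ball 0 1 \<times> cbox (- pi) pi) (\<lambda>(z, t). complex_of_real (H t) * kz z t)"
        unfolding box_real(2) by (simp add: case_prod_beta')
    qed (rule convex_ball)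
    then show ?thesis unfolding gI_def box_real(2) .
  qed
  have hk: "(\<lambda>z. complex_of_real (H pi) * kk z pi) holomorphic_on ball 0 1"
    unfolding kk_def by (intro holomorphic_intros) (use cis_ne in auto)
  have hg: "g holomorphic_on ball 0 1"
    unfolding g_def by (intro holomorphic_intros hk hgI) simp
  show ?thesis
  proof (intro conjI ballI exI[of _ "\<lambda>z. Re (g z)"])
    fix r \<theta> :: real assume r: "r \<in> {0..<1}" and \<theta>: "\<theta> \<in> {-pi..pi}"
    show "laplace_integrable (-pi) pi (\<lambda>t. G t * poisson_kernel r (\<theta> - t))" by (rule P1[OF r])
  next
    show "harmonic_on (ball 0 1) (\<lambda>z. Re (g z))" by (rule harmonic_Re[OF hg])
  next
    fix r \<theta> :: real assume r: "r \<in> {0..<1}" and \<theta>: "\<theta> \<in> {-pi..pi}"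
    define z where "z = complex_of_real r * cis \<theta>"
    have zn: "cmod z < 1" using r unfolding z_def by (simp add: norm_mult)
    have "((\<lambda>t. complex_of_real (H t) * kt z t) has_integral gI z) {-pi..pi}"
      unfolding gI_def by (rule integrable_integral[OF intI[OF zn]])
    from has_integral_Re[OF this]
    have "((\<lambda>t. H t * Re (kt z t)) has_integral Re (gI z)) {-pi..pi}" by simp
    then have ReI: "Re (gI z) = integral {-pi..pi} (\<lambda>t. H t * Re (kt z t))" by (simp add: integral_unique)
    have "Re (g z) = (H pi * Re (kk z pi) - Re (gI z)) / (2 * pi)"
      unfolding g_def by simp
    also have "\<dots> = 1 / (2 * pi) * phi_C1.Aop (-pi) pi (\<lambda>t. poisson_kernel r (\<theta> - t)) (\<lambda>t. Re (kt z t)) H"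
    proof -
      have A: "phi_C1.Aop (-pi) pi (\<lambda>t. poisson_kernel r (\<theta> - t)) (\<lambda>t. Re (kt z t)) H =
          H pi * poisson_kernel r (\<theta> - pi) - integral {-pi..pi} (\<lambda>u. H u * Re (kt z u))"
        using inst[OF r, of \<theta>] unfolding z_def by (simp add: phi_C1.Aop_def)
      show ?thesis unfolding A ReI poisson_eq[OF z_def] by simp
    qed
    also have "\<dots> = 1 / (2 * pi) * laplace_integral (-pi) pi (\<lambda>t. G t * poisson_kernel r (\<theta> - t))"
      using P2[OF r, of \<theta>] unfolding z_def by simp
    finally show "Re (g (complex_of_real r * cis \<theta>)) = 1 / (2 * pi) * laplace_integral (-pi) pi (\<lambda>t. G t * poisson_kernel r (\<theta> - t))"
      unfolding z_def .
  qed
qed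


end
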